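(* Let $(\widetilde\Omega,V,P,c)$ be a traveling wave solution in the sense defined in the context, with $c\ge 0$, and set $M=\int_{\widetilde\Omega}c\,dx\,dy$. Then there is $p_1\in\mathbb R$ such that $$P(x,y)=p_1-Vx,\qquad c(x,y)=\frac{M}{\int_{\widetilde\Omega}e^{-aVx'}\,dx'\,dy'}\,e^{-aVx}\qquad\text{in }\widetilde\Omega .$$ Consequently the boundary $\widetilde\Gamma=\partial\widetilde\Omega$ satisfies $$\gamma\kappa(x,y)=p_1-Vx-\chi f\Big(\frac{M}{\int_{\widetilde\Omega}e^{-aVx'}dx'dy'}e^{-aVx}\Big)\quad\text{for }(x,y)\in\widetilde\Gamma .$$
   Context: A traveling wave solution (moving in direction $\mathbf e_x=(1,0)$) is given by a bounded domain $\widetilde\Omega\subset\mathbb R^2$ with $C^{2,1}$ boundary $\widetilde\Gamma$, a real number $V>0$, and two $C^\infty$ functions $P,c$ on $\widetilde\Omega$ (smooth up to the boundary) satisfying $-\Delta P=0$ in $\widetilde\Omega$; $P=\gamma\kappa+\chi f(c)$ on $\widetilde\Gamma$; $-\nabla P\cdot\mathbf n=(V,0)\cdot\mathbf n$ on $\widetilde\Gamma$; $\operatorname{div}\big((V,0)c+(1-a)c\nabla P+\nabla c\big)=0$ in $\widetilde\Omega$; $a c(V,0)\cdot\mathbf n+\nabla c\cdot\mathbf n=0$ on $\widetilde\Gamma$. Here $\kappa$ is the curvature of $\widetilde\Gamma$ (positive for a circle), $\mathbf n$ the outward unit normal, $\gamma\ge0,\chi\ge0$, $a\in[0,1]$ constants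 and $f$ a given function. (This corresponds to the solution $\Omega(t)=\widetilde\Omega+tV\mathbf e_x$ of the free boundary problem $-\Delta P=0$, $P=\gamma\kappa+\chi f(c)$, $V_n=-\nabla P\cdot \mathbf n$, $\partial_tc-\Delta c=(1-a)\nabla P\cdot\nabla c$, $\nabla c\cdot\mathbf n=ac\nabla P\cdot\mathbf n$.) *)

theory Defs
  imports "HOL-Analysis.Analysis"
begin

fun Ck :: "nat \<Rightarrow> (real \<times> real) set \<Rightarrow> (real \<times> real \<Rightarrow> real) \<Rightarrow> bool" where
  "Ck 0 U f = continuous_on U f"
| "Ck (Suc k) U f = ((\<forall>p\<in>U. f differentiable (at p)) \<and>
      (\<forall>i\<in>(Basis :: (real \<times> real) set). Ck k U (\<lambda>p. frechet_derivative f (at p) i)))"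

definition smooth_on :: "(real \<times> real) set \<Rightarrow> (real \<times> real \<Rightarrow> real) \<Rightarrow> bool" where
  "smooth_on U f \<longleftrightarrow> (\<forall>k. Ck k U f)"

definition dX :: "(real \<times> real \<Rightarrow> real) \<Rightarrow> real \<times> real \<Rightarrow> real" where
  "dX f p = frechet_derivative f (at p) (1, 0)"

definition dY :: "(real \<times> real \<Rightarrow> real) \<Rightarrow> real \<times> real \<Rightarrow> real" where
  "dY f p = frechet_derivative f (at p) (0, 1)"

definition grad :: "(real \<times> real \<Rightarrow> real) \<Rightarrow> real \<times> real \<Rightarrow> real \<times> real" where
  "grad f p = (dX f p, dY f p)"

definition laplacian :: "(real \<times> real \<Rightarrow> real) \<Rightarrow> real \<times> real \<Rightarrow> real" where
  "laplacian f p = dX (dX f) p + dY (dY f) p"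

definition div2 :: "(real \<times> real \<Rightarrow> real \<times> real) \<Rightarrow> real \<times> real \<Rightarrow> real" where
  "div2 F p = dX (\<lambda>q. fst (F q)) p + dY (\<lambda>q. snd (F q)) p"

text \<open>Outward unit normal n = grad phi / |grad phi| and curvature
 kappa = div n (positive for a circle).\<close>
definition C21_defining_function ::
  "(real \<times> real) set \<Rightarrow> (real \<times> real) set \<Rightarrow> (real \<times> real \<Rightarrow> real) \<Rightarrow> bool" where
  "C21_defining_function Om U phi \<longleftrightarrow>
     open U \<and> frontier Om \<subseteq> U \<and> Ck 2 U phi \<and>
     (\<forall>i\<in>(Basis :: (real \<times> real) set). \<forall>j\<in>(Basis :: (real \<times> real) set).
        \<exists>L. L-lipschitz_on U (\<lambda>p. frechet_derivative
              (\<lambda>q. frechet_derivative phi (at q) i) (at p) j)) \<and>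
     Om \<inter> U = {p \<in> U. phi p < 0} \<and>
     (\<forall>p\<in>frontier Om. grad phi p \<noteq> 0)"

definition normal :: "(real \<times> real \<Rightarrow> real) \<Rightarrow> real \<times> real \<Rightarrow> real \<times> real" where
  "normal phi p = (1 / norm (grad phi p)) *\<^sub>R grad phi p"

definition curvature :: "(real \<times> real \<Rightarrow> real) \<Rightarrow> real \<times> real \<Rightarrow> real" where
  "curvature phi p = div2 (normal phi) p"

definition bounded_domain :: "(real \<times> real) set \<Rightarrow> bool" where
  "bounded_domain Om \<longleftrightarrow> open Om \<and> connected Om \<and> bounded Om \<and> Om \<noteq> {}"

text \<open>P, c are smooth up to the boundary: restrictions
 of C^\<infinity> functions on an open neighbourhood of the closure.\<close>
definition traveling_wave ::
  "real \<Rightarrow> real \<Rightarrow> real \<Rightarrow> (real \<Rightarrow> real) \<Rightarrow> (real \<times> real) set \<Rightarrow> (real \<times> real) set \<Rightarrow>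
   (real \<times> real \<Rightarrow> real) \<Rightarrow> real \<Rightarrow> (real \<times> real \<Rightarrow> real) \<Rightarrow> (real \<times> real \<Rightarrow> real) \<Rightarrow> bool" where
  "traveling_wave gamma chi a f Om U phi V P c \<longleftrightarrow>
     bounded_domain Om \<and> C21_defining_function Om U phi \<and> V > 0 \<and>
     (\<exists>W. open W \<and> closure Om \<subseteq> W \<and> smooth_on W P \<and> smooth_on W c) \<and>
     (\<forall>p\<in>Om. - laplacian P p = 0) \<and>
     (\<forall>p\<in>frontier Om. P p = gamma * curvature phi p + chi * f (c p)) \<and>
     (\<forall>p\<in>frontier Om. - (grad P p \<bullet> normal phi p) = (V, 0) \<bullet> normal phi p) \<and>
     (\<forall>p\<in>Om. div2 (\<lambda>q. c q *\<^sub>R (V, 0) + ((1 - a) * c q) *\<^sub>R grad P q + grad c q) p = 0) \<and>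
     (\<forall>p\<in>frontier Om. a * c p * ((V, 0) \<bullet> normal phi p) + grad c p \<bullet> normal phi p = 0)"

end

theory Submission
  imports Defs
begin


definition C1 :: "(real \<times> real \<Rightarrow> real) \<Rightarrow> (real \<times> real \<Rightarrow> real) \<Rightarrow> (real \<times> real \<Rightarrow> real) \<Rightarrow> (real \<times> real) set \<Rightarrow> bool" where
  "C1 f fx fy S \<longleftrightarrow> (\<forall>p\<in>S. (f has_derivative (\<lambda>v. fst v * fx p + snd v * fy p)) (at p))
     \<and> continuous_on S fx \<and> continuous_on S fy"

lemma Basis_R2: "(Basis :: (real \<times> real) set) = {(1,0),(0,1)}"
  by (auto simp: Basis_prod_def)

lemma C1_dXY: assumes "C1 f fx fy S" "p \<in> S" shows "dX f p = fx p" "dY f p = fy p"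
proof -
  have "(f has_derivative (\<lambda>v. fst v * fx p + snd v * fy p)) (at p)" using assms unfolding C1_def by blast
  from frechet_derivative_at[OF this] have e: "frechet_derivative f (at p) = (\<lambda>v. fst v * fx p + snd v * fy p)" by simp
  show "dX f p = fx p" "dY f p = fy p"
    unfolding dX_def dY_def e by simp_all
qed

lemma Ck_cont: "Ck k S f \<Longrightarrow> continuous_on S f"
proof (cases k)
  case 0 then show "Ck k S f \<Longrightarrow> continuous_on S f" by simp
next
  case (Suc n)
  assume "Ck k S f"
  then have "\<forall>p\<in>S. f differentiable (at p)" using Suc by simp
  then show ?thesis
    by (meson continuous_at_imp_continuous_on differentiable_imp_continuous_within)
qed

lemma diff_repr:
  assumes "f differentiable (at p)"
  shows "(f has_derivative (\<lambda>v. fst v * dX f p + snd v * dY f p)) (at p)"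
proof -
  have lin: "linear (frechet_derivative f (at p))" using linear_frechet_derivative[OF assms] .
  have "frechet_derivative f (at p) = (\<lambda>v. fst v * dX f p + snd v * dY f p)"
  proof
    fix v :: "real \<times> real"
    have v: "v = fst v *\<^sub>R (1,0) + snd v *\<^sub>R (0,1)" by (cases v) simp
    have "frechet_derivative f (at p) v = fst v *\<^sub>R frechet_derivative f (at p) (1,0) + snd v *\<^sub>R frechet_derivative f (at p) (0,1)"
    proof -
      have "frechet_derivative f (at p) v = frechet_derivative f (at p) (fst v *\<^sub>R (1,0) + snd v *\<^sub>R (0,1))"
        using v by metis
      also have "\<dots> = fst v *\<^sub>R frechet_derivative f (at p) (1,0) + snd v *\<^sub>R frechet_derivative f (at p) (0,1)"
        by (simp only: linear_add[OF lin] linear_scale[OF lin])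
      finally show ?thesis .
    qed
    then show "frechet_derivative f (at p) v = fst v * dX f p + snd v * dY f p"
      by (simp add: dX_def dY_def)
  qed
  then show ?thesis using frechet_derivative_works[THEN iffD1, OF assms] by simp
qed

lemma Ck_Suc_C1:
  assumes "Ck (Suc k) S f"
  shows "C1 f (dX f) (dY f) S" "Ck k S (dX f)" "Ck k S (dY f)"
proof -
  have d: "\<forall>p\<in>S. f differentiable (at p)" and b: "\<forall>i\<in>Basis. Ck k S (\<lambda>p. frechet_derivative f (at p) i)"
    using assms by auto
  show k1: "Ck k S (dX f)" "Ck k S (dY f)" using b unfolding Basis_R2 dX_def[abs_def] dY_def[abs_def] by auto
  show "C1 f (dX f) (dY f) S" unfolding C1_def using d diff_repr Ck_cont[OF k1(1)] Ck_cont[OF k1(2)] by blast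
qed

lemma smooth_C2:
  assumes "smooth_on S f"
  shows "C1 f (dX f) (dY f) S" "C1 (dX f) (dX (dX f)) (dY (dX f)) S" "C1 (dY f) (dX (dY f)) (dY (dY f)) S"
proof -
  have "Ck 2 S f" using assms smooth_on_def by blast
  then have a: "Ck (Suc (Suc 0)) S f" by (simp add: numeral_2_eq_2)
  show "C1 f (dX f) (dY f) S" using Ck_Suc_C1[OF a] by blast
  have "Ck (Suc 0) S (dX f)" "Ck (Suc 0) S (dY f)" using Ck_Suc_C1[OF a] by blast+
  then show "C1 (dX f) (dX (dX f)) (dY (dX f)) S" "C1 (dY f) (dX (dY f)) (dY (dY f)) S"
    using Ck_Suc_C1 by blast+
qed

lemma C1_subset: "C1 f fx fy S \<Longrightarrow> T \<subseteq> S \<Longrightarrow> C1 f fx fy T"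
  unfolding C1_def by (meson continuous_on_subset subsetD)

lemma C1_cont: "C1 f fx fy S \<Longrightarrow> continuous_on S f"
  unfolding C1_def
  by (meson continuous_at_imp_continuous_on has_derivative_continuous)

lemma C1_const: "C1 (\<lambda>p. k) (\<lambda>p. 0) (\<lambda>p. 0) S"
  unfolding C1_def by simp

lemma C1_fst: "C1 (\<lambda>p. fst p) (\<lambda>p. 1) (\<lambda>p. 0) S"
  unfolding C1_def by (simp add: has_derivative_fst[OF has_derivative_ident])

lemma C1_snd: "C1 (\<lambda>p. snd p) (\<lambda>p. 0) (\<lambda>p. 1) S"
  unfolding C1_def by (simp add: has_derivative_snd[OF has_derivative_ident])

lemma C1_add: "C1 f fx fy S \<Longrightarrow> C1 g gx gy S \<Longrightarrow> C1 (\<lambda>p. f p + g p) (\<lambda>p. fx p + gx p) (\<lambda>p. fy p + gy p) S"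
proof -
  assume f: "C1 f fx fy S" and g: "C1 g gx gy S"
  show ?thesis unfolding C1_def
  proof (intro conjI ballI)
    fix p assume p: "p \<in> S"
    have "((\<lambda>p. f p + g p) has_derivative (\<lambda>v. (fst v * fx p + snd v * fy p) + (fst v * gx p + snd v * gy p))) (at p)"
      using f g p unfolding C1_def by (intro has_derivative_add) auto
    then show "((\<lambda>p. f p + g p) has_derivative (\<lambda>v. fst v * (fx p + gx p) + snd v * (fy p + gy p))) (at p)"
      by (simp add: algebra_simps)
  next
    show "continuous_on S (\<lambda>p. fx p + gx p)" "continuous_on S (\<lambda>p. fy p + gy p)"
      using f g unfolding C1_def by (auto intro!: continuous_on_add)
  qed
qed

lemma C1_mult: "C1 f fx fy S \<Longrightarrow> C1 g gx gy S \<Longrightarrow>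
   C1 (\<lambda>p. f p * g p) (\<lambda>p. fx p * g p + f p * gx p) (\<lambda>p. fy p * g p + f p * gy p) S"
proof -
  assume f: "C1 f fx fy S" and g: "C1 g gx gy S"
  have cf: "continuous_on S f" "continuous_on S g" using f g C1_cont by blast+
  show ?thesis unfolding C1_def
  proof (intro conjI ballI)
    fix p assume p: "p \<in> S"
    have "((\<lambda>p. f p * g p) has_derivative (\<lambda>v. f p * (fst v * gx p + snd v * gy p) + (fst v * fx p + snd v * fy p) * g p)) (at p)"
      using f g p unfolding C1_def by (intro has_derivative_mult) auto
    then show "((\<lambda>p. f p * g p) has_derivative (\<lambda>v. fst v * (fx p * g p + f p * gx p) + snd v * (fy p * g p + f p * gy p))) (at p)"
      by (simp add: algebra_simps)
  next
    show "continuous_on S (\<lambda>p. fx p * g p + f p * gx p)" "continuous_on S (\<lambda>p. fy p * g p + f p * gy p)"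
      using f g cf unfolding C1_def by (auto intro!: continuous_intros)
  qed
qed

lemma C1_cmult: "C1 f fx fy S \<Longrightarrow> C1 (\<lambda>p. k * f p) (\<lambda>p. k * fx p) (\<lambda>p. k * fy p) S"
  using C1_mult[OF C1_const[of k S]] by simp

lemma C1_comp:
  assumes "C1 f fx fy S" "\<And>t. (h has_real_derivative h' t) (at t)" "continuous_on UNIV h'"
  shows "C1 (\<lambda>p. h (f p)) (\<lambda>p. h' (f p) * fx p) (\<lambda>p. h' (f p) * fy p) S"
proof -
  have cf: "continuous_on S f" using assms C1_cont by blast
  show ?thesis unfolding C1_def
  proof (intro conjI ballI)
    fix p assume p: "p \<in> S"
    have hd: "(h has_derivative (\<lambda>x. h' (f p) * x)) (at (f p))"
      using assms(2)[of "f p"] by (simp add: has_field_derivative_def)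
    have fd: "(f has_derivative (\<lambda>v. fst v * fx p + snd v * fy p)) (at p)" using assms p unfolding C1_def by blast
    show "((\<lambda>p. h (f p)) has_derivative (\<lambda>v. fst v * (h' (f p) * fx p) + snd v * (h' (f p) * fy p))) (at p)"
      using has_derivative_compose[OF fd hd] by (simp add: o_def algebra_simps)
  next
    have "continuous_on S (\<lambda>p. h' (f p))" using cf assms(3) by (metis continuous_on_compose2 subset_UNIV)
    then show "continuous_on S (\<lambda>p. h' (f p) * fx p)" "continuous_on S (\<lambda>p. h' (f p) * fy p)"
      using assms(1) unfolding C1_def by (auto intro!: continuous_intros)
  qed
qed

lemma C1_exp: "C1 f fx fy S \<Longrightarrow> C1 (\<lambda>p. exp (f p)) (\<lambda>p. exp (f p) * fx p) (\<lambda>p. exp (f p) * fy p) S"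
  by (rule C1_comp[where h=exp and h'=exp]) (auto intro: DERIV_exp continuous_on_exp continuous_on_id)

lemma C1_cong:
  assumes "C1 f fx fy S" "open S" "\<And>p. p \<in> S \<Longrightarrow> f p = g p" "\<And>p. p \<in> S \<Longrightarrow> fx p = gx p"
   "\<And>p. p \<in> S \<Longrightarrow> fy p = gy p" shows "C1 g gx gy S"
  unfolding C1_def
proof (intro conjI ballI)
  fix p assume p: "p \<in> S"
  have "(f has_derivative (\<lambda>v. fst v * fx p + snd v * fy p)) (at p)" using assms(1) p unfolding C1_def by blast
  then have "(g has_derivative (\<lambda>v. fst v * fx p + snd v * fy p)) (at p)"
    by (rule has_derivative_transform_within_open[OF _ assms(2) p assms(3)])
  then show "(g has_derivative (\<lambda>v. fst v * gx p + snd v * gy p)) (at p)" using assms(4,5)[OF p] by simp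
next
  show "continuous_on S gx" using assms(1,4) unfolding C1_def using continuous_on_cong by blast
  show "continuous_on S gy" using assms(1,5) unfolding C1_def using continuous_on_cong by blast
qed



section \<open>cutoff function\<close>

definition clamp :: "real \<Rightarrow> real" where "clamp t = max 0 (min 1 t)"
definition hc :: "real \<Rightarrow> real" where "hc t = 3 * (clamp t)^2 - 2 * (clamp t)^3"
definition hc' :: "real \<Rightarrow> real" where "hc' t = 6 * clamp t - 6 * (clamp t)^2"

lemma deriv_glue:
  assumes "(f has_real_derivative d) (at x within {..x})" "(f has_real_derivative d) (at x within {x..})"
  shows "(f has_real_derivative d) (at x)"
proof -
  have "((\<lambda>y. (f y - f x) / (y - x)) \<longlongrightarrow> d) (at x within ({..x} \<union> {x..}))"
    using assms unfolding has_field_derivative_iff Lim_within_Un by blast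
  moreover have "{..x} \<union> {x..} = (UNIV :: real set)" by auto
  ultimately show ?thesis unfolding has_field_derivative_iff by simp
qed

lemma poly_deriv: "((\<lambda>t::real. 3 * t^2 - 2 * t^3) has_real_derivative (6 * t - 6 * t^2)) (at t within S)"
  by (auto intro!: derivative_eq_intros simp: power2_eq_square power3_eq_cube)

lemma hc_deriv: "(hc has_real_derivative hc' t) (at t)"
proof -
  consider "t < 0" | "t = 0" | "0 < t \<and> t < 1" | "t = 1" | "1 < t" by linarith
  then show ?thesis
  proof cases
    case 1
    have "((\<lambda>t. 0) has_real_derivative 0) (at t)" by simp
    then have "(hc has_real_derivative 0) (at t)"
      by (rule has_field_derivative_transform_within_open[where S="{..<0}"])
         (use 1 in \<open>auto simp: hc_def hc'_def clamp_def\<close>)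
    moreover have "hc' t = 0" using 1 by (simp add: hc'_def clamp_def)
    ultimately show ?thesis by simp
  next
    case 5
    have "((\<lambda>t. 1) has_real_derivative 0) (at t)" by simp
    then have "(hc has_real_derivative 0) (at t)"
      by (rule has_field_derivative_transform_within_open[where S="{1<..}"])
         (use 5 in \<open>auto simp: hc_def hc'_def clamp_def\<close>)
    moreover have "hc' t = 0" using 5 by (simp add: hc'_def clamp_def)
    ultimately show ?thesis by simp
  next
    case 3
    have "((\<lambda>t::real. 3 * t^2 - 2 * t^3) has_real_derivative (6 * t - 6 * t^2)) (at t)"
      using poly_deriv[of t UNIV] by simp
    then have "(hc has_real_derivative (6 * t - 6 * t^2)) (at t)"
      by (rule has_field_derivative_transform_within_open[where S="{0<..<1}"])
         (use 3 in \<open>auto simp: hc_def hc'_def clamp_def\<close>)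
    moreover have "hc' t = 6 * t - 6 * t^2" using 3 by (simp add: hc'_def clamp_def)
    ultimately show ?thesis by simp
  next
    case 2
    show ?thesis unfolding 2
    proof (rule deriv_glue)
      have "((\<lambda>t. 0) has_real_derivative hc' 0) (at 0 within {..0})" by (simp add: hc'_def clamp_def)
      then show "(hc has_real_derivative hc' 0) (at 0 within {..0})"
        by (rule has_field_derivative_transform_within[where d=1]) (auto simp: hc_def hc'_def clamp_def)
      have "((\<lambda>t::real. 3 * t^2 - 2 * t^3) has_real_derivative hc' 0) (at 0 within {0..})"
        using poly_deriv[of 0 "{0..}"] by (simp add: hc'_def clamp_def)
      then show "(hc has_real_derivative hc' 0) (at 0 within {0..})"
        by (rule has_field_derivative_transform_within[where d=1]) (auto simp: hc_def hc'_def clamp_def dist_real_def)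
    qed
  next
    case 4
    show ?thesis unfolding 4
    proof (rule deriv_glue)
      have "((\<lambda>t. 1) has_real_derivative hc' 1) (at 1 within {1..})" by (simp add: hc'_def clamp_def)
      then show "(hc has_real_derivative hc' 1) (at 1 within {1..})"
        by (rule has_field_derivative_transform_within[where d=1]) (auto simp: hc_def hc'_def clamp_def)
      have "((\<lambda>t::real. 3 * t^2 - 2 * t^3) has_real_derivative hc' 1) (at 1 within {..1})"
        using poly_deriv[of 1 "{..1}"] by (simp add: hc'_def clamp_def)
      then show "(hc has_real_derivative hc' 1) (at 1 within {..1})"
        by (rule has_field_derivative_transform_within[where d=1]) (auto simp: hc_def hc'_def clamp_def dist_real_def)
    qed
  qed
qed

lemma clamp_cont: "continuous_on UNIV clamp"
  unfolding clamp_def[abs_def] by (intro continuous_intros)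

lemma hc'_cont: "continuous_on UNIV hc'"
  unfolding hc'_def[abs_def] using clamp_cont by (intro continuous_intros) auto

lemma clamp_bounds: "0 \<le> clamp t" "clamp t \<le> 1" by (auto simp: clamp_def)

lemma hc_bounds: "0 \<le> hc t" "hc t \<le> 1"
proof -
  define s where "s = clamp t"
  have s: "0 \<le> s" "s \<le> 1" using clamp_bounds s_def by auto
  have "3 * s^2 - 2 * s^3 = s^2 * (3 - 2 * s)" by (simp add: power2_eq_square power3_eq_cube algebra_simps)
  moreover have "0 \<le> s^2 * (3 - 2 * s)" using s by simp
  ultimately show "0 \<le> hc t" unfolding hc_def s_def[symmetric] by simp
  have "1 - (3 * s^2 - 2 * s^3) = (1 - s)^2 * (1 + 2 * s)" by (simp add: power2_eq_square power3_eq_cube algebra_simps)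
  moreover have "0 \<le> (1 - s)^2 * (1 + 2 * s)" using s by simp
  ultimately show "hc t \<le> 1" unfolding hc_def s_def[symmetric] by simp
qed

lemma hc'_bound: "\<bar>hc' t\<bar> \<le> 2"
proof -
  define s where "s = clamp t"
  have s: "0 \<le> s" "s \<le> 1" using clamp_bounds s_def by auto
  have "0 \<le> 6 * s - 6 * s^2" using s by (simp add: power2_eq_square mult_left_le)
  moreover have "6 * s - 6 * s^2 \<le> 2"
  proof -
    have "0 \<le> 6 * (s - 1/2)^2 + 1/2" by simp
    then show ?thesis by (simp add: power2_eq_square algebra_simps)
  qed
  ultimately show ?thesis unfolding hc'_def s_def[symmetric] by simp
qed

lemma hc_le0: "t \<le> 0 \<Longrightarrow> hc t = 0" "t \<le> 0 \<Longrightarrow> hc' t = 0"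
  by (auto simp: hc_def hc'_def clamp_def)
lemma hc_ge1: "1 \<le> t \<Longrightarrow> hc t = 1" "1 \<le> t \<Longrightarrow> hc' t = 0"
  by (auto simp: hc_def hc'_def clamp_def)

section \<open>integral of a derivative of a compactly supported function\<close>

lemma deriv_vert:
  assumes "(f has_derivative (\<lambda>v. fst v * fx p + snd v * fy p)) (at p)"
  shows "((\<lambda>y. f (fst p, y)) has_vector_derivative fy p) (at (snd p) within S)"
proof -
  have pd: "((\<lambda>y. (fst p, y)) has_derivative (\<lambda>h. (0, h))) (at (snd p) within S)"
    by (rule has_derivative_Pair[OF has_derivative_const has_derivative_ident, simplified])
  have fd: "(f has_derivative (\<lambda>v. fst v * fx p + snd v * fy p)) (at (fst p, snd p))" using assms by simp
  have "((\<lambda>y. f (fst p, y)) has_derivative (\<lambda>h. fst (0, h) * fx p + snd (0, h) * fy p)) (at (snd p) within S)"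
    using has_derivative_in_compose[OF pd fd[THEN has_derivative_at_withinI]] by (simp add: o_def)
  then show ?thesis unfolding has_vector_derivative_def by (simp add: mult.commute)
qed

lemma integral_dy_zero:
  fixes f fx fy :: "real \<times> real \<Rightarrow> real"
  assumes d: "\<And>p. (f has_derivative (\<lambda>v. fst v * fx p + snd v * fy p)) (at p)"
    and c: "continuous_on UNIV fy"
    and s: "\<And>p. p \<notin> cbox (a1,a2) (b1,b2) \<Longrightarrow> f p = 0"
    and ab: "a1 \<le> b1" "a2 \<le> b2"
  shows "integral (cbox (a1-1,a2-1) (b1+1,b2+1)) fy = 0"
proof -
  have "integral (cbox (a1-1,a2-1) (b1+1,b2+1)) fy
      = integral (cbox (a1-1) (b1+1)) (\<lambda>x. integral (cbox (a2-1) (b2+1)) (\<lambda>y. fy (x, y)))"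
    by (rule integral_prod_continuous) (use c continuous_on_subset in blast)
  also have "\<dots> = integral (cbox (a1-1) (b1+1)) (\<lambda>x. 0)"
  proof (rule integral_cong)
    fix x :: real
    have "((\<lambda>y. fy (x, y)) has_integral (f (x, b2+1) - f (x, a2-1))) {a2-1..b2+1}"
    proof (rule fundamental_theorem_of_calculus[OF _])
      show "a2 - 1 \<le> b2 + 1" using ab by simp
      fix y assume "y \<in> {a2 - 1..b2 + 1}"
      show "((\<lambda>y. f (x, y)) has_vector_derivative fy (x, y)) (at y within {a2 - 1..b2 + 1})"
        using deriv_vert[of f fx "(x,y)" fy, OF d[of "(x,y)"]] by simp
    qed
    moreover have "f (x, b2+1) = 0" "f (x, a2-1) = 0" using s by (auto simp: cbox_Pair_iff)
    ultimately show "integral (cbox (a2 - 1) (b2 + 1)) (\<lambda>y. fy (x, y)) = 0"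
      by (simp add: integral_unique)
  qed
  finally show ?thesis by simp
qed

lemma deriv_zero_outside:
  fixes f fx fy :: "real \<times> real \<Rightarrow> real"
  assumes d: "(f has_derivative (\<lambda>v. fst v * fx p + snd v * fy p)) (at p)"
    and s: "\<And>p. p \<notin> cbox (a1,a2) (b1,b2) \<Longrightarrow> f p = 0"
    and p: "p \<notin> cbox (a1,a2) (b1,b2)"
  shows "fx p = 0" "fy p = 0"
proof -
  have "((\<lambda>q. 0) has_derivative (\<lambda>v. 0)) (at p)" by simp
  then have "(f has_derivative (\<lambda>v. 0)) (at p)"
    by (rule has_derivative_transform_within_open[where s="- cbox (a1,a2) (b1,b2)"]) (use p s in auto)
  from has_derivative_unique[OF d this] have e: "(\<lambda>v. fst v * fx p + snd v * fy p) = (\<lambda>v. 0)" .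
  show "fx p = 0" using fun_cong[OF e, of "(1,0)"] by simp
  show "fy p = 0" using fun_cong[OF e, of "(0,1)"] by simp
qed

lemma has_integral_dy_zero:
  fixes f fx fy :: "real \<times> real \<Rightarrow> real"
  assumes d: "\<And>p. (f has_derivative (\<lambda>v. fst v * fx p + snd v * fy p)) (at p)"
    and c: "continuous_on UNIV fy"
    and s: "\<And>p. p \<notin> cbox (a1,a2) (b1,b2) \<Longrightarrow> f p = 0"
    and ab: "a1 \<le> b1" "a2 \<le> b2"
  shows "(fy has_integral 0) UNIV"
proof -
  let ?B = "cbox (a1-1,a2-1) (b1+1,b2+1)"
  have "fy integrable_on ?B" by (rule integrable_continuous) (use c continuous_on_subset in blast)
  then have "(fy has_integral 0) ?B" using integral_dy_zero[OF d c s ab] by (metis has_integral_integral)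
  moreover have "fy p = 0" if "p \<notin> ?B" for p
  proof -
    have "p \<notin> cbox (a1,a2) (b1,b2)" using that by (cases p) (auto simp: cbox_Pair_iff)
    from deriv_zero_outside[where f=f and fx=fx and fy=fy and p=p, OF d[of p] s this] show ?thesis by blast
  qed
  ultimately show ?thesis by (rule has_integral_on_superset) auto
qed

lemma has_integral_dx_zero:
  fixes f fx fy :: "real \<times> real \<Rightarrow> real"
  assumes d: "\<And>p. (f has_derivative (\<lambda>v. fst v * fx p + snd v * fy p)) (at p)"
    and c: "continuous_on UNIV fx"
    and s: "\<And>p. p \<notin> cbox (a1,a2) (b1,b2) \<Longrightarrow> f p = 0"
    and ab: "a1 \<le> b1" "a2 \<le> b2"
  shows "(fx has_integral 0) UNIV"
proof -
  let ?B = "cbox (a1-1,a2-1) (b1+1,b2+1)"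
  define g where "g = (\<lambda>p::real\<times>real. f (snd p, fst p))"
  have dg: "(g has_derivative (\<lambda>v. fst v * fy (snd p, fst p) + snd v * fx (snd p, fst p))) (at p)" for p
  proof -
    have sw: "((\<lambda>p::real\<times>real. (snd p, fst p)) has_derivative (\<lambda>v. (snd v, fst v))) (at p)"
      by (intro has_derivative_Pair has_derivative_snd has_derivative_fst has_derivative_ident)
    have "(f has_derivative (\<lambda>v. fst v * fx (snd p, fst p) + snd v * fy (snd p, fst p))) (at (snd p, fst p))"
      by (rule d)
    from has_derivative_compose[OF sw this] show ?thesis
      unfolding g_def by (simp add: o_def algebra_simps)
  qed
  have cg: "continuous_on UNIV (\<lambda>p::real\<times>real. fx (snd p, fst p))"
    by (rule continuous_on_compose2[OF c]) (auto intro!: continuous_intros)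
  have sg: "g p = 0" if "p \<notin> cbox (a2,a1) (b2,b1)" for p
    using s[of "(snd p, fst p)"] that unfolding g_def by (cases p) (auto simp: cbox_Pair_iff)
  have i0: "integral (cbox (a2-1,a1-1) (b2+1,b1+1)) (\<lambda>p. fx (snd p, fst p)) = 0"
    by (rule integral_dy_zero[OF dg cg sg]) (use ab in auto)
  have "integral ?B (\<lambda>(x, y). fx (x,y)) = integral (cbox (a2-1,a1-1) (b2+1,b1+1)) (\<lambda>(x, y). fx (y,x))"
    by (rule integral_swap_2dim) (use c continuous_on_subset in \<open>auto simp: case_prod_beta'\<close>)
  then have i: "integral ?B fx = 0" using i0 by (simp add: case_prod_beta')
  have "fx integrable_on ?B" by (rule integrable_continuous) (use c continuous_on_subset in blast)
  then have "(fx has_integral 0) ?B" using i by (metis has_integral_integral)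
  moreover have "fx p = 0" if "p \<notin> ?B" for p
  proof -
    have "p \<notin> cbox (a1,a2) (b1,b2)" using that by (cases p) (auto simp: cbox_Pair_iff)
    from deriv_zero_outside[where f=f and fx=fx and fy=fy and p=p, OF d[of p] s this] show ?thesis by blast
  qed
  ultimately show ?thesis by (rule has_integral_on_superset) auto
qed



lemma thick_nbhd:
  fixes K Ob :: "(real \<times> real) set"
  assumes "compact K" "K \<noteq> {}" "open Ob" "K \<subseteq> Ob"
  shows "\<exists>r>0. \<forall>p. infdist p K \<le> r \<longrightarrow> p \<in> Ob"
proof (cases "Ob = UNIV")
  case True then show ?thesis by (intro exI[of _ 1]) auto
next
  case False
  then have ne: "- Ob \<noteq> {}" by auto
  have cl: "closed (- Ob)" using assms(3) by auto
  obtain x y where xy: "x \<in> K" "y \<in> - Ob" "dist x y = setdist K (- Ob)"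
    using setdist_compact_closed[OF assms(1) cl assms(2) ne] by blast
  have "x \<noteq> y" using xy assms(4) by auto
  then have d: "setdist K (- Ob) > 0" using xy by (metis zero_less_dist_iff)
  show ?thesis
  proof (intro exI[of _ "setdist K (- Ob) / 2"] conjI allI impI)
    show "setdist K (- Ob) / 2 > 0" using d by simp
    fix p assume p: "infdist p K \<le> setdist K (- Ob) / 2"
    obtain k where k: "k \<in> K" "infdist p K = dist p k"
      using infdist_attains_inf[OF compact_imp_closed[OF assms(1)] assms(2)] by blast
    show "p \<in> Ob"
    proof (rule ccontr)
      assume "p \<notin> Ob"
      then have "setdist K (- Ob) \<le> dist k p" using setdist_le_dist[OF k(1)] by simp
      then show False using p k d by (simp add: dist_commute)
    qed
  qed
qed

lemma line_deriv:
  fixes phi :: "real \<times> real \<Rightarrow> real"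
  assumes "(phi has_derivative (\<lambda>u. fst u * a + snd u * b)) (at (q + s *\<^sub>R v))"
  shows "((\<lambda>s. phi (q + s *\<^sub>R v)) has_real_derivative (fst v * a + snd v * b)) (at s)"
proof -
  have l: "((\<lambda>s. q + s *\<^sub>R v) has_derivative (\<lambda>h. h *\<^sub>R v)) (at s)"
    by (intro has_derivative_add[OF has_derivative_const, simplified] has_derivative_scaleR_left has_derivative_ident)
  have "((\<lambda>s. phi (q + s *\<^sub>R v)) has_derivative (\<lambda>h. fst (h *\<^sub>R v) * a + snd (h *\<^sub>R v) * b)) (at s)"
    using has_derivative_compose[OF l assms] by (simp add: o_def)
  moreover have "(\<lambda>h. fst (h *\<^sub>R v) * a + snd (h *\<^sub>R v) * b) = (*) (fst v * a + snd v * b)"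
    by (rule ext) (simp add: algebra_simps)
  ultimately show ?thesis unfolding has_field_derivative_def by simp
qed

lemma boundary_point:
  fixes Om U :: "(real \<times> real) set" and phi phx phy :: "real \<times> real \<Rightarrow> real"
  assumes lev: "Om \<inter> U = {p\<in>U. phi p < 0}" and phi: "C1 phi phx phy U"
    and q: "q \<in> Om" and qU: "q \<in> U" and m: "m > 0" and s0: "s0 = 2 * (- phi q) / m"
    and v: "norm v = 1"
    and sub: "\<And>s. s \<in> {0..s0} \<Longrightarrow> q + s *\<^sub>R v \<in> U"
    and lb: "\<And>s. s \<in> {0..s0} \<Longrightarrow> phx (q + s *\<^sub>R v) * fst v + phy (q + s *\<^sub>R v) * snd v \<ge> m / 2"
  shows "\<exists>b\<in>frontier Om. dist q b \<le> s0"
proof -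
  have pq: "phi q < 0" using lev q qU by blast
  then have s0p: "s0 > 0" unfolding s0 using m by (intro divide_pos_pos) auto
  define f where "f = (\<lambda>s. phi (q + s *\<^sub>R v))"
  have fd: "(f has_real_derivative (fst v * phx (q + s *\<^sub>R v) + snd v * phy (q + s *\<^sub>R v))) (at s)"
    if "s \<in> {0..s0}" for s
    unfolding f_def by (rule line_deriv) (use phi sub[OF that] in \<open>auto simp: C1_def\<close>)
  have "continuous_on {0..s0} f"
    using fd by (meson DERIV_isCont continuous_at_imp_continuous_on)
  moreover have "\<And>x. 0 < x \<Longrightarrow> x < s0 \<Longrightarrow> f differentiable (at x)"
    using fd by (meson atLeastAtMost_iff less_eq_real_def real_differentiable_def)
  ultimately obtain l z where lz: "0 < z" "z < s0" "DERIV f z :> l" "f s0 - f 0 = (s0 - 0) * l"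
    using MVT[OF s0p] by blast
  have "l = fst v * phx (q + z *\<^sub>R v) + snd v * phy (q + z *\<^sub>R v)"
    using DERIV_unique[OF lz(3) fd] lz by simp
  then have "l \<ge> m / 2" using lb[of z] lz by (simp add: mult.commute)
  then have "f s0 - f 0 \<ge> s0 * (m / 2)" using lz(4) s0p by (simp add: mult_left_mono)
  moreover have "s0 * (m / 2) = - phi q" using s0 m by simp
  ultimately have fe: "phi (q + s0 *\<^sub>R v) \<ge> 0" unfolding f_def by simp
  define e where "e = q + s0 *\<^sub>R v"
  have "e \<in> U" using sub[of s0] s0p e_def by simp
  then have eO: "e \<notin> Om" using fe e_def lev by (metis (mono_tags, lifting) IntI mem_Collect_eq not_less)
  have "closed_segment q e \<inter> frontier Om \<noteq> {}"
    by (rule connected_Int_frontier) (use q eO in auto)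
  then obtain b where b: "b \<in> closed_segment q e" "b \<in> frontier Om" by blast
  have "dist q b \<le> dist q e" using dist_in_closed_segment[OF b(1)] by (simp add: dist_commute)
  also have "dist q e = s0" using v s0p by (simp add: e_def dist_norm)
  finally show ?thesis using b by blast
qed

lemma lip_segment:
  fixes g gx gy :: "real \<times> real \<Rightarrow> real"
  assumes g: "C1 g gx gy S" and sub: "closed_segment a b \<subseteq> S"
    and B: "\<And>p. p \<in> closed_segment a b \<Longrightarrow> \<bar>gx p\<bar> + \<bar>gy p\<bar> \<le> B"
  shows "\<bar>g a - g b\<bar> \<le> B * dist a b"
proof -
  have "norm (g a - g b) \<le> B * norm (a - b)"
  proof (rule differentiable_bound[where f'="\<lambda>p v. fst v * gx p + snd v * gy p"])
    show "convex (closed_segment a b)" by simp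
    show "(g has_derivative (\<lambda>v. fst v * gx x + snd v * gy x)) (at x within closed_segment a b)"
      if "x \<in> closed_segment a b" for x
      using g sub that unfolding C1_def by (blast intro: has_derivative_at_withinI)
    show "onorm (\<lambda>v. fst v * gx x + snd v * gy x) \<le> B" if "x \<in> closed_segment a b" for x
    proof (rule onorm_le)
      fix v :: "real \<times> real"
      have f: "\<bar>fst v\<bar> \<le> norm v" "\<bar>snd v\<bar> \<le> norm v"
        using norm_fst_le[of "fst v" "snd v"] norm_snd_le[of "snd v" "fst v"] by simp_all
      have "norm (fst v * gx x + snd v * gy x) \<le> \<bar>fst v\<bar> * \<bar>gx x\<bar> + \<bar>snd v\<bar> * \<bar>gy x\<bar>"
        by (simp add: abs_mult[symmetric] abs_triangle_ineq[THEN order_trans])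
      also have "\<dots> \<le> norm v * \<bar>gx x\<bar> + norm v * \<bar>gy x\<bar>"
        using f by (intro add_mono mult_right_mono) auto
      also have "\<dots> = norm v * (\<bar>gx x\<bar> + \<bar>gy x\<bar>)" by (simp add: distrib_left)
      also have "\<dots> \<le> norm v * B" using B[OF that] by (intro mult_left_mono) auto
      finally show "norm (fst v * gx x + snd v * gy x) \<le> B * norm v" by (simp add: mult.commute)
    qed
  qed auto
  then show ?thesis by (simp add: dist_norm)
qed



lemma C1_Un: "C1 f fx fy S \<Longrightarrow> C1 f fx fy T \<Longrightarrow> open S \<Longrightarrow> open T \<Longrightarrow> C1 f fx fy (S \<union> T)"
  unfolding C1_def by (auto intro: continuous_on_open_Un)

lemma neumann_grad_zero:
  fixes Om U W :: "(real \<times> real) set"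
    and phi phx phy phxx phxy phyx phyy w wx wy rho F1 F1x F1y F2 F2x F2y :: "real \<times> real \<Rightarrow> real"
  assumes dom: "bounded_domain Om"
    and U: "open U" "frontier Om \<subseteq> U"
    and phi: "C1 phi phx phy U" and phx: "C1 phx phxx phxy U" and phy: "C1 phy phyx phyy U"
    and lev: "Om \<inter> U = {p\<in>U. phi p < 0}"
    and ng: "\<forall>p\<in>frontier Om. (phx p, phy p) \<noteq> 0"
    and W: "open W" "closure Om \<subseteq> W"
    and w: "C1 w wx wy W"
    and F1: "C1 F1 F1x F1y W" and F2: "C1 F2 F2x F2y W"
    and rho: "\<forall>p\<in>Om. rho p > 0"
    and Fw: "\<forall>p\<in>Om. F1 p = rho p * wx p \<and> F2 p = rho p * wy p"
    and divF: "\<forall>p\<in>Om. F1x p + F2y p = 0"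
    and bc: "\<forall>p\<in>frontier Om. F1 p * phx p + F2 p * phy p = 0"
    and p0: "p0 \<in> Om" "wx p0 \<noteq> 0 \<or> wy p0 \<noteq> 0"
  shows False
proof -
  have Om: "open Om" "connected Om" "bounded Om" "Om \<noteq> {}" using dom unfolding bounded_domain_def by auto
  define K where "K = frontier Om"
  have Kc: "compact K" unfolding K_def using Om(3) by (simp add: compact_frontier_bounded)
  have Kne: "K \<noteq> {}" unfolding K_def using Om(3,4) frontier_not_empty not_bounded_UNIV by metis
  have clK: "closure Om = Om \<union> K" unfolding K_def using Om(1) closure_Un_frontier by blast
  have KU: "K \<subseteq> U" "K \<subseteq> W" using U(2) W(2) closure_Un_frontier unfolding K_def by auto
  have OmK: "Om \<inter> K = {}" unfolding K_def frontier_def using interior_open[OF Om(1)] by blast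
  define E where "E = (\<lambda>p. wx p * F1 p + wy p * F2 p)"
  have wc: "continuous_on W wx" "continuous_on W wy" "continuous_on W w" using w C1_cont[OF w] by (simp_all add: C1_def)
  have Fc: "continuous_on W F1" "continuous_on W F2" using C1_cont[OF F1] C1_cont[OF F2] by simp_all
  have Econt: "continuous_on W E" unfolding E_def
    by (intro continuous_on_add continuous_on_mult wc Fc)
  have Enn: "E p \<ge> 0" if "p \<in> Om" for p
  proof -
    have "E p = rho p * (wx p ^ 2 + wy p ^ 2)" using Fw that unfolding E_def by (simp add: power2_eq_square algebra_simps)
    then show ?thesis using rho that by (metis less_imp_le mult_nonneg_nonneg sum_power2_ge_zero)
  qed
  have E0: "E p0 > 0"
  proof -
    have "E p0 = rho p0 * (wx p0 ^ 2 + wy p0 ^ 2)" using Fw p0 unfolding E_def by (simp add: power2_eq_square algebra_simps)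
    moreover have "wx p0 ^ 2 + wy p0 ^ 2 > 0" using p0(2) by (simp add: sum_power2_gt_zero_iff)
    ultimately show ?thesis using rho p0 by simp
  qed
  define Dphi where "Dphi = (\<lambda>p. (phx p, phy p))"
  have phc: "continuous_on U phx" "continuous_on U phy" using phi by (simp_all add: C1_def)
  have Dcont: "continuous_on U Dphi" unfolding Dphi_def by (intro continuous_on_Pair phc)
  obtain k0 where k0: "k0 \<in> K" "\<And>k. k \<in> K \<Longrightarrow> norm (Dphi k0) \<le> norm (Dphi k)"
    using continuous_attains_inf[OF Kc Kne continuous_on_norm[OF continuous_on_subset[OF Dcont KU(1)]]]
    by blast
  define m where "m = norm (Dphi k0) / 2"
  have "Dphi k0 \<noteq> 0" using ng k0(1) unfolding Dphi_def K_def by blast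
  then have m: "m > 0" unfolding m_def by simp
  define Ob where "Ob = (U \<inter> W) \<inter> (\<lambda>p. norm (Dphi p)) -` {m<..}"
  have "continuous_on (U \<inter> W) (\<lambda>p. norm (Dphi p))"
    by (intro continuous_on_norm continuous_on_subset[OF Dcont]) auto
  then have Obo: "open Ob" unfolding Ob_def
    by (rule continuous_open_preimage) (simp_all add: U(1) W(1) open_Int)
  have KOb: "K \<subseteq> Ob"
  proof
    fix k assume k: "k \<in> K"
    have "norm (Dphi k) \<ge> 2 * m" using k0(2)[OF k] unfolding m_def by simp
    then have "norm (Dphi k) > m" using m by simp
    then show "k \<in> Ob" unfolding Ob_def using KU k by auto
  qed
  obtain r0 where r0: "r0 > 0" "\<And>p. infdist p K \<le> r0 \<Longrightarrow> p \<in> Ob"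
    using thick_nbhd[OF Kc Kne Obo KOb] by blast
  define R where "R = {p. infdist p K \<le> r0}"
  have Rc: "compact R" unfolding R_def by (rule compact_infdist_le[OF Kne Kc r0(1)])
  have ROb: "R \<subseteq> Ob" using r0 unfolding R_def by auto
  have RU: "R \<subseteq> U" "R \<subseteq> W" using ROb unfolding Ob_def by auto
  have Rm: "norm (Dphi p) > m" if "p \<in> R" for p using ROb that unfolding Ob_def by auto
  have KR: "K \<subseteq> R" unfolding R_def using r0 by auto
  have "uniformly_continuous_on R Dphi"
    by (rule compact_uniformly_continuous[OF continuous_on_subset[OF Dcont RU(1)] Rc])
  then obtain dl where dl: "dl > 0" "\<And>x x'. x \<in> R \<Longrightarrow> x' \<in> R \<Longrightarrow> dist x' x < dl \<Longrightarrow> dist (Dphi x') (Dphi x) < m / 2"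
    unfolding uniformly_continuous_on_def using m by (metis half_gt_zero)
  define r where "r = min (r0 / 3) (dl / 2)"
  have r: "r > 0" "2 * r \<le> r0" "r < dl" using r0 dl unfolding r_def by auto
  define g where "g = (\<lambda>p. F1 p * phx p + F2 p * phy p)"
  define gx where "gx = (\<lambda>p. F1x p * phx p + F1 p * phxx p + (F2x p * phy p + F2 p * phyx p))"
  define gy where "gy = (\<lambda>p. F1y p * phx p + F1 p * phxy p + (F2y p * phy p + F2 p * phyy p))"
  have F1': "C1 F1 F1x F1y (U \<inter> W)" by (rule C1_subset[OF F1]) auto
  have F2': "C1 F2 F2x F2y (U \<inter> W)" by (rule C1_subset[OF F2]) auto
  have phx': "C1 phx phxx phxy (U \<inter> W)" by (rule C1_subset[OF phx]) auto
  have phy': "C1 phy phyx phyy (U \<inter> W)" by (rule C1_subset[OF phy]) auto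
  have gC1: "C1 g gx gy (U \<inter> W)" unfolding g_def gx_def gy_def
    by (rule C1_add[OF C1_mult[OF F1' phx'] C1_mult[OF F2' phy']])
  have RUW: "R \<subseteq> U \<inter> W" using RU by auto
  obtain Bg where Bg: "\<And>p. p \<in> R \<Longrightarrow> \<bar>gx p\<bar> + \<bar>gy p\<bar> \<le> Bg"
  proof -
    have "continuous_on (U \<inter> W) gx" "continuous_on (U \<inter> W) gy" using gC1 by (simp_all add: C1_def)
    then have "continuous_on R gx" "continuous_on R gy" using continuous_on_subset[OF _ RUW] by blast+
    then have "continuous_on R (\<lambda>p. \<bar>gx p\<bar> + \<bar>gy p\<bar>)"
      by (intro continuous_on_add continuous_on_rabs)
    moreover have "R \<noteq> {}" using KR Kne by blast
    ultimately obtain x where "x \<in> R" "\<And>y. y \<in> R \<Longrightarrow> \<bar>gx y\<bar> + \<bar>gy y\<bar> \<le> \<bar>gx x\<bar> + \<bar>gy x\<bar>"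
      using continuous_attains_sup[OF Rc] by blast
    then show ?thesis using that by blast
  qed
  have Bg0: "Bg \<ge> 0"
  proof -
    have "k0 \<in> R" using KR k0(1) by blast
    from Bg[OF this] show ?thesis by (meson abs_ge_zero add_nonneg_nonneg order_trans)
  qed
  obtain Bw where Bw: "\<And>p. p \<in> closure Om \<Longrightarrow> \<bar>w p\<bar> \<le> Bw"
  proof -
    have "continuous_on (closure Om) (\<lambda>p. \<bar>w p\<bar>)"
      by (intro continuous_on_rabs continuous_on_subset[OF wc(3) W(2)])
    moreover have "closure Om \<noteq> {}" "compact (closure Om)" using Om(3,4) by (simp_all add: compact_closure)
    ultimately obtain x where "x \<in> closure Om" "\<And>y. y \<in> closure Om \<Longrightarrow> \<bar>w y\<bar> \<le> \<bar>w x\<bar>"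
      using continuous_attains_sup[of "closure Om"] by blast
    then show ?thesis using that by blast
  qed
  have Bw0: "Bw \<ge> 0"
  proof -
    have "p0 \<in> closure Om" using p0(1) closure_subset by blast
    from Bw[OF this] show ?thesis by (meson abs_ge_zero order_trans)
  qed
  obtain d0 where d0: "d0 > 0" "\<And>p. p \<in> Om \<Longrightarrow> r / 2 \<le> infdist p K \<Longrightarrow> infdist p K \<le> r \<Longrightarrow> phi p \<le> - d0"
  proof -
    define C where "C = closure Om \<inter> ({p. r / 2 \<le> infdist p K} \<inter> {p. infdist p K \<le> r})"
    have CO: "p \<in> Om" "p \<in> U" if "p \<in> C" for p
    proof -
      have "infdist p K > 0" using that r unfolding C_def by auto
      then have "p \<notin> K" by auto
      then show "p \<in> Om" using that clK unfolding C_def by auto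
      have "infdist p K \<le> r0" using that r unfolding C_def by auto
      then show "p \<in> U" using r0(2) unfolding Ob_def by auto
    qed
    have cl1: "closed {p. r / 2 \<le> infdist p K}" by (rule closed_Collect_le) (auto intro!: continuous_intros)
    have cl2: "closed {p. infdist p K \<le> r}" by (rule closed_Collect_le) (auto intro!: continuous_intros)
    have Cc: "compact C" unfolding C_def
      by (intro compact_Int_closed[OF compact_closure[THEN iffD2, OF Om(3)]] closed_Int cl1 cl2)
    show ?thesis
    proof (cases "C = {}")
      case True
      show ?thesis
      proof (rule that[of 1])
        fix p assume "p \<in> Om" "r / 2 \<le> infdist p K" "infdist p K \<le> r"
        then have "p \<in> C" unfolding C_def using closure_subset by blast
        then show "phi p \<le> - 1" using True by blast
      qed simp
    next
      case False
      have "continuous_on C phi" using C1_cont[OF phi] CO(2) continuous_on_subset by blast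
      then obtain x where x: "x \<in> C" "\<And>y. y \<in> C \<Longrightarrow> phi y \<le> phi x"
        using continuous_attains_sup[OF Cc False] by blast
      have "phi x < 0" using CO[OF x(1)] lev by blast
      show ?thesis
      proof (rule that[of "- phi x"])
        show "0 < - phi x" using \<open>phi x < 0\<close> by simp
        fix p assume "p \<in> Om" "r / 2 \<le> infdist p K" "infdist p K \<le> r"
        then have "p \<in> C" unfolding C_def using closure_subset by blast
        then show "phi p \<le> - (- phi x)" using x(2) by simp
      qed
    qed
  qed
  obtain Q where Q: "Q \<subseteq> Om" "Q \<in> lmeasurable" "measure lebesgue Q > 0" "\<And>p. p \<in> Q \<Longrightarrow> E p \<ge> E p0 / 2"
  proof -
    have "p0 \<in> W" using p0(1) W(2) closure_subset by blast
    then have "isCont E p0" using Econt W(1) continuous_on_eq_continuous_at by blast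
    then obtain d1 where d1: "d1 > 0" "\<And>x. dist x p0 < d1 \<Longrightarrow> dist (E x) (E p0) < E p0 / 2"
      unfolding continuous_at_eps_delta using E0 by (metis half_gt_zero)
    obtain d2 where d2: "d2 > 0" "ball p0 d2 \<subseteq> Om" using Om(1) p0(1) open_contains_ball by blast
    define a where "a = min d1 d2 / 4"
    have a: "a > 0" using d1 d2 unfolding a_def by simp
    define Q where "Q = cbox (fst p0 - a, snd p0 - a) (fst p0 + a, snd p0 + a)"
    have dQ: "dist x p0 < min d1 d2" if "x \<in> Q" for x
    proof -
      have x: "\<bar>fst x - fst p0\<bar> \<le> a" "\<bar>snd x - snd p0\<bar> \<le> a"
        using that unfolding Q_def by (cases x; auto simp: cbox_Pair_iff)+
      have "dist x p0 = norm (fst x - fst p0, snd x - snd p0)" by (cases x; cases p0) (simp add: dist_norm)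
      also have "\<dots> \<le> norm (fst x - fst p0) + norm (snd x - snd p0)" by (rule norm_Pair_le)
      also have "\<dots> \<le> 2 * a" using x by simp
      also have "\<dots> < min d1 d2" using a d1(1) d2(1) unfolding a_def by linarith
      finally show ?thesis .
    qed
    show ?thesis
    proof (rule that[of Q])
      show "Q \<subseteq> Om" using dQ d2 by (auto simp: dist_commute)
      show "Q \<in> lmeasurable" unfolding Q_def by simp
      have "measure lebesgue Q = measure lborel Q" unfolding Q_def by (intro measure_completion) simp
      also have "\<dots> = (2 * a) * (2 * a)" unfolding Q_def using a by (simp add: content_Pair)
      finally show "measure lebesgue Q > 0" using a by simp
      fix p assume "p \<in> Q"
      then have "dist (E p) (E p0) < E p0 / 2" using dQ d1 by simp
      then show "E p \<ge> E p0 / 2" unfolding dist_real_def by linarith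
    qed
  qed
  define S where "S = (\<lambda>e. {p \<in> Om. infdist p K < r \<and> - e < phi p})"
  have AU: "p \<in> U" if "infdist p K < r" for p
    using r0(2)[of p] that r unfolding Ob_def by auto
  have Smono: "S e \<subseteq> S e'" if "e \<le> e'" for e e' unfolding S_def using that by auto
  have Sm: "S e \<in> lmeasurable" for e
  proof -
    have phic: "continuous_on U phi" by (rule C1_cont[OF phi])
    have o1: "open {p. infdist p K < r}"
      by (rule open_Collect_less) (auto intro!: continuous_intros)
    have o2: "open (U \<inter> phi -` {- e<..})"
      by (rule continuous_open_preimage[OF phic U(1)]) simp
    have "S e = Om \<inter> ({p. infdist p K < r} \<inter> (U \<inter> phi -` {- e<..}))"
      unfolding S_def using AU by auto
    moreover have "open (Om \<inter> ({p. infdist p K < r} \<inter> (U \<inter> phi -` {- e<..})))"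
      by (rule open_Int[OF Om(1) open_Int[OF o1 o2]])
    moreover have "bounded (S e)" using Om(3) unfolding S_def by (rule bounded_subset) auto
    ultimately show ?thesis by (metis lmeasurable_open)
  qed
  define c where "c = Bw * (4 * Bg / m)"
  have c0: "c \<ge> 0" unfolding c_def using Bw0 Bg0 m by simp
  have key: "E p0 / 2 * measure lebesgue Q \<le> (E p0 / 2 + c) * measure lebesgue (S e)"
    if e: "0 < e" "e \<le> d0" "e \<le> m * r / 2" for e
  proof -
    define chi where "chi = (\<lambda>p. if infdist p K < r then hc ((-1/e) * phi p) else if p \<in> Om then 1 else (0::real))"
    define chx where "chx = (\<lambda>p. if infdist p K < r then hc' ((-1/e) * phi p) * ((-1/e) * phx p) else 0)"
    define chy where "chy = (\<lambda>p. if infdist p K < r then hc' ((-1/e) * phi p) * ((-1/e) * phy p) else 0)"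
    have neg: "(-1/e) * phi p \<le> 0" if "phi p \<ge> 0" for p
      using that e(1) by (simp add: mult_nonpos_nonneg)
    have ge1: "(-1/e) * phi p \<ge> 1" if "phi p \<le> - e" for p
    proof -
      have "(-1/e) * phi p = (- phi p) / e" by simp
      moreover have "e / e \<le> (- phi p) / e" using that e(1) by (intro divide_right_mono) auto
      then have "(- phi p) / e \<ge> 1" using e(1) by simp
      ultimately show ?thesis by simp
    qed
    have f1: "chi p = 0" "chx p = 0" "chy p = 0" if "p \<notin> Om" for p
    proof -
      have "hc ((-1/e) * phi p) = 0 \<and> hc' ((-1/e) * phi p) = 0" if "infdist p K < r"
      proof -
        have "p \<in> U" using AU that by blast
        moreover have "p \<notin> {q\<in>U. phi q < 0}" using lev \<open>p \<notin> Om\<close> by blast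
        ultimately have "phi p \<ge> 0" by (simp add: not_less)
        then show ?thesis using neg hc_le0 by blast
      qed
      then show "chi p = 0" "chx p = 0" "chy p = 0" unfolding chi_def chx_def chy_def using that by auto
    qed
    have f2: "chi p = 1" "chx p = 0" "chy p = 0" if "p \<in> Om" "p \<notin> S e" for p
    proof -
      have "hc ((-1/e) * phi p) = 1 \<and> hc' ((-1/e) * phi p) = 0" if "infdist p K < r"
      proof -
        have "phi p \<le> - e" using \<open>p \<in> Om\<close> \<open>p \<notin> S e\<close> that unfolding S_def by auto
        then show ?thesis using ge1 hc_ge1 by blast
      qed
      then show "chi p = 1" "chx p = 0" "chy p = 0" unfolding chi_def chx_def chy_def using that by auto
    qed
    have f3: "0 \<le> chi p" "chi p \<le> 1" for p unfolding chi_def using hc_bounds by auto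
    define A where "A = {p. infdist p K < r}"
    define B1 where "B1 = Om \<inter> {p. r / 2 < infdist p K}"
    define B2 where "B2 = - closure Om \<inter> {p. r / 2 < infdist p K}"
    have oA: "open A" unfolding A_def by (rule open_Collect_less) (auto intro!: continuous_intros)
    have oR2: "open {p. r / 2 < infdist p K}" by (rule open_Collect_less) (auto intro!: continuous_intros)
    have oB1: "open B1" unfolding B1_def by (rule open_Int[OF Om(1) oR2])
    have oB2: "open B2" unfolding B2_def by (rule open_Int[OF _ oR2]) auto
    have hcomp: "C1 (\<lambda>p. hc ((-1/e) * phi p)) (\<lambda>p. hc' ((-1/e) * phi p) * ((-1/e) * phx p))
                   (\<lambda>p. hc' ((-1/e) * phi p) * ((-1/e) * phy p)) U"
      by (rule C1_comp[OF C1_cmult[OF phi] hc_deriv hc'_cont])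
    have cA: "C1 chi chx chy A"
      by (rule C1_cong[OF C1_subset[OF hcomp] oA]) (use AU in \<open>auto simp: A_def chi_def chx_def chy_def\<close>)
    have cB1: "C1 chi chx chy B1"
    proof (rule C1_cong[OF C1_const[of 1 B1] oB1])
      fix p assume p: "p \<in> B1"
      have "p \<notin> S e"
      proof
        assume "p \<in> S e"
        then have "infdist p K < r" "- e < phi p" unfolding S_def by auto
        moreover have "phi p \<le> - d0" using d0(2)[of p] p \<open>infdist p K < r\<close> unfolding B1_def by auto
        ultimately show False using e by linarith
      qed
      then show "1 = chi p" "0 = chx p" "0 = chy p" using f2[of p] p unfolding B1_def by auto
    qed
    have nO: "p \<notin> Om" if "p \<notin> closure Om" for p using that closure_subset by blast
    have cB2: "C1 chi chx chy B2"
    proof (rule C1_cong[OF C1_const[of 0 B2] oB2])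
      fix p assume "p \<in> B2"
      then have "p \<notin> Om" using nO unfolding B2_def by blast
      then show "0 = chi p" "0 = chx p" "0 = chy p" using f1 by simp_all
    qed
    have cov: "A \<union> (B1 \<union> B2) = UNIV"
    proof -
      have "p \<in> A \<union> (B1 \<union> B2)" for p
      proof (cases "infdist p K < r")
        case True then show ?thesis unfolding A_def by auto
      next
        case False
        then have "infdist p K > 0" using r by auto
        then have "p \<notin> K" by auto
        then show ?thesis using False r clK unfolding A_def B1_def B2_def by auto
      qed
      then show ?thesis by blast
    qed
    have chiC1: "C1 chi chx chy UNIV"
      using C1_Un[OF cA C1_Un[OF cB1 cB2 oB1 oB2] oA open_Un[OF oB1 oB2]] cov by simp
    have f5: "\<bar>chx p * F1 p + chy p * F2 p\<bar> \<le> 4 * Bg / m" if pS: "p \<in> S e" for p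
    proof -
      have pO: "p \<in> Om" and pA: "infdist p K < r" and pe: "- e < phi p" using pS unfolding S_def by auto
      have pU: "p \<in> U" using AU pA by blast
      have pneg: "phi p < 0" using lev pO pU by blast
      have inR: "x \<in> R" if "dist x p \<le> r" for x
      proof -
        have "infdist x K \<le> infdist p K + dist x p" by (rule infdist_triangle)
        then have "infdist x K \<le> r0" using that pA r by linarith
        then show ?thesis unfolding R_def by simp
      qed
      have pR: "p \<in> R" using inR[of p] r by simp
      have Np: "norm (Dphi p) > m" using Rm pR .
      define v where "v = (1 / norm (Dphi p)) *\<^sub>R Dphi p"
      have "Dphi p \<noteq> 0" using Np m by auto
      then have nv: "norm v = 1" by (simp add: v_def)
      define s0 where "s0 = 2 * (- phi p) / m"
      have "2 * (- phi p) < m * r" using pe e(3) by linarith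
      then have s0r: "s0 < r" unfolding s0_def by (metis pos_divide_less_eq m mult.commute)
      have s0e: "s0 \<le> 2 * e / m" unfolding s0_def using pe m by (intro divide_right_mono) auto
      have seg: "p + s *\<^sub>R v \<in> U" and lbd: "phx (p + s *\<^sub>R v) * fst v + phy (p + s *\<^sub>R v) * snd v \<ge> m / 2"
        if "s \<in> {0..s0}" for s
      proof -
        define q where "q = p + s *\<^sub>R v"
        have dq: "dist q p = s" using that nv unfolding q_def by (simp add: dist_norm)
        then have qR: "q \<in> R" using inR that s0r by auto
        then show "p + s *\<^sub>R v \<in> U" using RU q_def by blast
        have "dist (Dphi q) (Dphi p) < m / 2" using dl(2)[OF pR qR] dq that s0r r by auto
        have i1: "phx q * fst v + phy q * snd v = inner (Dphi q) v" by (cases v) (simp add: Dphi_def)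
        have i2: "inner (Dphi q) v = inner (Dphi p) v + inner (Dphi q - Dphi p) v" by (simp add: inner_diff_left)
        have i3: "inner (Dphi p) v = norm (Dphi p)"
          using Np m unfolding v_def by (simp add: power2_norm_eq_inner[symmetric] power2_eq_square)
        have "\<bar>inner (Dphi q - Dphi p) v\<bar> \<le> norm (Dphi q - Dphi p) * norm v" by (rule Cauchy_Schwarz_ineq2)
        also have "\<dots> < m / 2" using \<open>dist (Dphi q) (Dphi p) < m / 2\<close> nv by (simp add: dist_norm)
        finally show "phx (p + s *\<^sub>R v) * fst v + phy (p + s *\<^sub>R v) * snd v \<ge> m / 2"
          using i1 i2 i3 Np unfolding q_def by linarith
      qed
      obtain b where b: "b \<in> frontier Om" "dist p b \<le> s0"
        using boundary_point[OF lev phi pO pU m s0_def nv seg lbd] by blast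
      have segR: "closed_segment p b \<subseteq> R"
      proof
        fix x assume "x \<in> closed_segment p b"
        then have "dist x p \<le> dist p b" using dist_in_closed_segment by blast
        then show "x \<in> R" using inR b s0r by auto
      qed
      have "\<bar>g p - g b\<bar> \<le> Bg * dist p b"
        by (rule lip_segment[OF gC1]) (use segR RUW Bg in auto)
      moreover have "g b = 0" using bc b(1) unfolding g_def by blast
      ultimately have "\<bar>g p\<bar> \<le> Bg * s0" using b(2) Bg0 by (metis diff_zero mult_left_mono order_trans)
      also have "\<dots> \<le> Bg * (2 * e / m)" using s0e Bg0 by (rule mult_left_mono)
      finally have gb: "\<bar>g p\<bar> \<le> Bg * (2 * e / m)" .
      have eq: "chx p * F1 p + chy p * F2 p = - (hc' ((-1/e) * phi p) * g p) / e"
        using pA e(1) unfolding chx_def chy_def g_def by (simp add: field_simps)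
      have "\<bar>chx p * F1 p + chy p * F2 p\<bar> = \<bar>hc' ((-1/e) * phi p)\<bar> * \<bar>g p\<bar> / e"
        unfolding eq using e(1) by (simp add: abs_mult)
      also have "\<dots> \<le> 2 * (Bg * (2 * e / m)) / e"
        using hc'_bound gb e(1) by (intro divide_right_mono mult_mono) auto
      also have "\<dots> = 4 * Bg / m" using e(1) m by (simp add: field_simps)
      finally show ?thesis .
    qed
    define G1 where "G1 = (\<lambda>p. chi p * w p * F1 p)"
    define G1x where "G1x = (\<lambda>p. (chx p * w p + chi p * wx p) * F1 p + chi p * w p * F1x p)"
    define G1y where "G1y = (\<lambda>p. (chy p * w p + chi p * wy p) * F1 p + chi p * w p * F1y p)"
    define G2 where "G2 = (\<lambda>p. chi p * w p * F2 p)"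
    define G2x where "G2x = (\<lambda>p. (chx p * w p + chi p * wx p) * F2 p + chi p * w p * F2x p)"
    define G2y where "G2y = (\<lambda>p. (chy p * w p + chi p * wy p) * F2 p + chi p * w p * F2y p)"
    have chiW: "C1 chi chx chy W" by (rule C1_subset[OF chiC1]) simp
    have oT: "open (- closure Om)" by auto
    have WT: "W \<union> - closure Om = UNIV" using W(2) by auto
    have G1C: "C1 G1 G1x G1y UNIV"
    proof -
      have "C1 G1 G1x G1y W" unfolding G1_def G1x_def G1y_def by (rule C1_mult[OF C1_mult[OF chiW w] F1])
      moreover have "C1 G1 G1x G1y (- closure Om)"
      proof (rule C1_cong[OF C1_const[of 0] oT])
        fix p assume "p \<in> - closure Om"
        then have "p \<notin> Om" using nO by blast
        then show "0 = G1 p" "0 = G1x p" "0 = G1y p" using f1[of p] unfolding G1_def G1x_def G1y_def by simp_all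
      qed
      ultimately show ?thesis using C1_Un[OF _ _ W(1) oT] WT by metis
    qed
    have G2C: "C1 G2 G2x G2y UNIV"
    proof -
      have "C1 G2 G2x G2y W" unfolding G2_def G2x_def G2y_def by (rule C1_mult[OF C1_mult[OF chiW w] F2])
      moreover have "C1 G2 G2x G2y (- closure Om)"
      proof (rule C1_cong[OF C1_const[of 0] oT])
        fix p assume "p \<in> - closure Om"
        then have "p \<notin> Om" using nO by blast
        then show "0 = G2 p" "0 = G2x p" "0 = G2y p" using f1[of p] unfolding G2_def G2x_def G2y_def by simp_all
      qed
      ultimately show ?thesis using C1_Un[OF _ _ W(1) oT] WT by metis
    qed
    obtain a1 a2 where box: "closure Om \<subseteq> cbox (-a1, -a2) (a1, a2)"
      using bounded_subset_cbox_symmetric[OF bounded_closure[OF Om(3)]] by (metis prod.collapse uminus_Pair)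
    have a12: "-a1 \<le> a1" "-a2 \<le> a2"
    proof -
      have "p0 \<in> cbox (-a1, -a2) (a1, a2)" using box p0(1) closure_subset by blast
      then show "-a1 \<le> a1" "-a2 \<le> a2" by (cases p0; auto simp: cbox_Pair_iff)+
    qed
    have supp: "chi p = 0" if "p \<notin> cbox (-a1, -a2) (a1, a2)" for p
      using f1 that box closure_subset by blast
    have I1: "(G1x has_integral 0) UNIV"
    proof (rule has_integral_dx_zero[where f=G1 and fy=G1y])
      show "(G1 has_derivative (\<lambda>v. fst v * G1x p + snd v * G1y p)) (at p)" for p using G1C unfolding C1_def by blast
      show "continuous_on UNIV G1x" using G1C unfolding C1_def by blast
      show "G1 p = 0" if "p \<notin> cbox (-a1, -a2) (a1, a2)" for p using supp[OF that] by (simp add: G1_def)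
    qed (use a12 in auto)
    have I2: "(G2y has_integral 0) UNIV"
    proof (rule has_integral_dy_zero[where f=G2 and fx=G2x])
      show "(G2 has_derivative (\<lambda>v. fst v * G2x p + snd v * G2y p)) (at p)" for p using G2C unfolding C1_def by blast
      show "continuous_on UNIV G2y" using G2C unfolding C1_def by blast
      show "G2 p = 0" if "p \<notin> cbox (-a1, -a2) (a1, a2)" for p using supp[OF that] by (simp add: G2_def)
    qed (use a12 in auto)
    have I: "((\<lambda>p. G1x p + G2y p) has_integral 0) UNIV" using has_integral_add[OF I1 I2] by simp
    have ident: "G1x p + G2y p = chi p * E p + w p * (chx p * F1 p + chy p * F2 p) + chi p * w p * (F1x p + F2y p)" for p
      unfolding G1x_def G2y_def E_def by (simp add: algebra_simps)
    define L where "L = (\<lambda>p. E p0 / 2 * indicator Q p - (E p0 / 2 + c) * indicator (S e) p :: real)"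
    have IL: "(L has_integral (E p0 / 2 * measure lebesgue Q - (E p0 / 2 + c) * measure lebesgue (S e))) UNIV"
      unfolding L_def
      by (intro has_integral_diff has_integral_mult_right lmeasurable_iff_has_integral[THEN iffD1] Q(2) Sm)
    have Lle: "L p \<le> G1x p + G2y p" for p
    proof (cases "p \<in> Om")
      case False
      then have "p \<notin> Q" "p \<notin> S e" using Q(1) unfolding S_def by auto
      then show ?thesis using False f1[OF False] unfolding ident L_def by simp
    next
      case pO: True
      show ?thesis
      proof (cases "p \<in> S e")
        case False
        have "L p \<le> E p"
        proof (cases "p \<in> Q")
          case True then show ?thesis using Q(4)[OF True] False unfolding L_def by simp
        next
          case False then show ?thesis using Enn[OF pO] \<open>p \<notin> S e\<close> unfolding L_def by simp
        qed
        then show ?thesis using f2[OF pO False] divF pO unfolding ident by simp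
      next
        case True
        have "L p \<le> E p0 / 2 - (E p0 / 2 + c)" unfolding L_def using True E0 by (simp add: indicator_def)
        also have "\<dots> = - c" by simp
        also have "- c \<le> w p * (chx p * F1 p + chy p * F2 p)"
        proof -
          have "\<bar>w p\<bar> \<le> Bw" using Bw pO closure_subset by blast
          then have "\<bar>w p * (chx p * F1 p + chy p * F2 p)\<bar> \<le> Bw * (4 * Bg / m)"
            unfolding abs_mult using f5[OF True] by (intro mult_mono) auto
          then show ?thesis unfolding c_def by linarith
        qed
        also have "\<dots> \<le> chi p * E p + w p * (chx p * F1 p + chy p * F2 p)"
          using f3[of p] Enn[OF pO] by simp
        also have "\<dots> = G1x p + G2y p" using divF pO unfolding ident by simp
        finally show ?thesis .
      qed
    qed
    have "E p0 / 2 * measure lebesgue Q - (E p0 / 2 + c) * measure lebesgue (S e) \<le> 0"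
      by (rule has_integral_le[OF IL I Lle])
    then show ?thesis by simp
  qed
  define e0 where "e0 = min d0 (m * r / 2)"
  have e0: "e0 > 0" "e0 \<le> d0" "e0 \<le> m * r / 2" unfolding e0_def using d0 m r by auto
  have lim: "(\<lambda>n. measure lebesgue (S (e0 / Suc n))) \<longlonglongrightarrow> 0"
  proof -
    have "(\<lambda>n. measure lebesgue (S (e0 / Suc n))) \<longlonglongrightarrow> measure lebesgue (\<Inter>n. S (e0 / Suc n))"
    proof (rule Lim_measure_decseq)
      show "range (\<lambda>n. S (e0 / real (Suc n))) \<subseteq> sets lebesgue" using Sm by (auto simp: fmeasurable_def)
      show "emeasure lebesgue (S (e0 / real (Suc n))) \<noteq> \<infinity>" for n
        using Sm[of "e0 / real (Suc n)"] by (auto simp: fmeasurable_def)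
      show "decseq (\<lambda>n. S (e0 / real (Suc n)))"
        unfolding decseq_def
      proof (intro allI impI)
        fix i j :: nat assume "i \<le> j"
        then have "e0 / real (Suc j) \<le> e0 / real (Suc i)" using e0 by (intro divide_left_mono) auto
        then show "S (e0 / real (Suc j)) \<subseteq> S (e0 / real (Suc i))" by (rule Smono)
      qed
    qed
    moreover have "(\<Inter>n. S (e0 / Suc n)) = {}"
    proof (rule ccontr)
      assume "(\<Inter>n. S (e0 / Suc n)) \<noteq> {}"
      then obtain p where p: "\<And>n. p \<in> S (e0 / Suc n)" by blast
      then have pO: "p \<in> Om" "infdist p K < r" using p[of 0] unfolding S_def by auto
      then have "phi p < 0" using AU lev by blast
      obtain n :: nat where n: "e0 / (- phi p) < n" using reals_Archimedean2 by blast
      then have "e0 < n * (- phi p)" using \<open>phi p < 0\<close> by (metis neg_0_less_iff_less pos_divide_less_eq)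
      also have "\<dots> \<le> real (Suc n) * (- phi p)" using \<open>phi p < 0\<close> by (intro mult_right_mono) auto
      finally have "e0 / real (Suc n) < - phi p" by (simp add: divide_less_eq mult.commute)
      moreover have "- (e0 / Suc n) < phi p" using p[of n] unfolding S_def by auto
      ultimately show False by simp
    qed
    ultimately show ?thesis by simp
  qed
  have Qpos: "E p0 / 2 * measure lebesgue Q / (E p0 / 2 + c) > 0"
    using E0 Q(3) c0 by (intro divide_pos_pos mult_pos_pos) auto
  obtain n where n: "measure lebesgue (S (e0 / Suc n)) < E p0 / 2 * measure lebesgue Q / (E p0 / 2 + c)"
  proof -
    have "eventually (\<lambda>n. measure lebesgue (S (e0 / Suc n)) < E p0 / 2 * measure lebesgue Q / (E p0 / 2 + c)) sequentially"
      by (rule order_tendstoD(2)[OF lim Qpos])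
    then obtain N where "\<forall>n\<ge>N. measure lebesgue (S (e0 / Suc n)) < E p0 / 2 * measure lebesgue Q / (E p0 / 2 + c)"
      unfolding eventually_sequentially by blast
    then show ?thesis using that[of N] by blast
  qed
  have "e0 / real (Suc n) \<le> e0 / 1" using e0 by (intro divide_left_mono) auto
  then have en: "e0 / real (Suc n) \<le> e0" by simp
  have "E p0 / 2 * measure lebesgue Q \<le> (E p0 / 2 + c) * measure lebesgue (S (e0 / Suc n))"
  proof (rule key)
    show "0 < e0 / real (Suc n)" using e0 by simp
    show "e0 / real (Suc n) \<le> d0" using en e0 by linarith
    show "e0 / real (Suc n) \<le> m * r / 2" using en e0 by linarith
  qed
  moreover have "(E p0 / 2 + c) * measure lebesgue (S (e0 / Suc n)) < E p0 / 2 * measure lebesgue Q"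
    using n E0 c0 by (simp add: less_divide_eq mult.commute algebra_simps)
  ultimately show False by simp
qed



lemma neumann_const:
  fixes Om U W :: "(real \<times> real) set"
    and phi phx phy phxx phxy phyx phyy w wx wy rho F1 F1x F1y F2 F2x F2y :: "real \<times> real \<Rightarrow> real"
  assumes dom: "bounded_domain Om"
    and U: "open U" "frontier Om \<subseteq> U"
    and phi: "C1 phi phx phy U" and phx: "C1 phx phxx phxy U" and phy: "C1 phy phyx phyy U"
    and lev: "Om \<inter> U = {p\<in>U. phi p < 0}"
    and ng: "\<forall>p\<in>frontier Om. (phx p, phy p) \<noteq> 0"
    and W: "open W" "closure Om \<subseteq> W"
    and w: "C1 w wx wy W"
    and F1: "C1 F1 F1x F1y W" and F2: "C1 F2 F2x F2y W"
    and rho: "\<forall>p\<in>Om. rho p > 0"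
    and Fw: "\<forall>p\<in>Om. F1 p = rho p * wx p \<and> F2 p = rho p * wy p"
    and divF: "\<forall>p\<in>Om. F1x p + F2y p = 0"
    and bc: "\<forall>p\<in>frontier Om. F1 p * phx p + F2 p * phy p = 0"
  shows "\<exists>k. \<forall>p\<in>Om. w p = k"
proof -
  have Om: "open Om" "connected Om" "Om \<noteq> {}" using dom unfolding bounded_domain_def by auto
  have z: "wx p = 0 \<and> wy p = 0" if "p \<in> Om" for p
    using neumann_grad_zero[OF dom U phi phx phy lev ng W w F1 F2 rho Fw divF bc that] by blast
  obtain p0 where p0: "p0 \<in> Om" using Om by blast
  have "w p0 = w p" if "p \<in> Om" for p
  proof (rule has_derivative_zero_unique_connected[OF Om(1) Om(2) _ p0 that])
    fix x assume x: "x \<in> Om"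
    then have "(w has_derivative (\<lambda>v. fst v * wx x + snd v * wy x)) (at x)"
      using w W closure_subset unfolding C1_def by blast
    then show "(w has_derivative (\<lambda>x. 0)) (at x)" using z[OF x] by simp
  qed
  then show ?thesis by metis
qed

lemma Ck2_C2:
  assumes "Ck 2 S f"
  shows "C1 f (dX f) (dY f) S" "C1 (dX f) (dX (dX f)) (dY (dX f)) S" "C1 (dY f) (dX (dY f)) (dY (dY f)) S"
proof -
  have a: "Ck (Suc (Suc 0)) S f" using assms by (simp add: numeral_2_eq_2)
  show "C1 f (dX f) (dY f) S" using Ck_Suc_C1[OF a] by blast
  have "Ck (Suc 0) S (dX f)" "Ck (Suc 0) S (dY f)" using Ck_Suc_C1[OF a] by blast+
  then show "C1 (dX f) (dX (dX f)) (dY (dX f)) S" "C1 (dY f) (dX (dY f)) (dY (dY f)) S"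
    using Ck_Suc_C1 by blast+
qed

lemma C1_canon: "C1 f fx fy S \<Longrightarrow> open S \<Longrightarrow> C1 f (dX f) (dY f) S"
  by (rule C1_cong[of f fx fy S]) (auto simp: C1_dXY)

lemma eq_on_closure:
  fixes f g :: "real \<times> real \<Rightarrow> real"
  assumes "continuous_on (closure S) f" "continuous_on (closure S) g" "\<And>x. x \<in> S \<Longrightarrow> f x = g x"
    "x \<in> closure S"
  shows "f x = g x"
proof -
  have "closed {x \<in> closure S. f x - g x = 0}"
    by (rule continuous_closed_preimage_constant) (use assms in \<open>auto intro!: continuous_intros\<close>)
  moreover have "S \<subseteq> {x \<in> closure S. f x - g x = 0}" using assms(3) closure_subset by auto
  ultimately have "closure S \<subseteq> {x \<in> closure S. f x - g x = 0}" by (rule closure_minimal[rotated])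
  then show ?thesis using assms(4) by auto
qed



lemma normal_parts:
  assumes "grad phi p \<noteq> 0"
  shows "normal phi p = (dX phi p / norm (dX phi p, dY phi p), dY phi p / norm (dX phi p, dY phi p))"
    "norm (dX phi p, dY phi p) \<noteq> 0"
  using assms by (auto simp: normal_def grad_def)

lemma neumann_alg:
  fixes u1 u2 v1 v2 :: real
  assumes "N \<noteq> 0" "- (u1 * (a / N) + u2 * (b / N)) = v1 * (a / N) + v2 * (b / N)"
  shows "(u1 + v1) * a + (u2 + v2) * b = 0"
proof -
  have e1: "- (u1 * a + u2 * b) = (- (u1 * (a / N) + u2 * (b / N))) * N" using assms(1) by (simp add: field_simps)
  have e2: "v1 * a + v2 * b = (v1 * (a / N) + v2 * (b / N)) * N" using assms(1) by (simp add: field_simps)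
  have "- (u1 * a + u2 * b) = v1 * a + v2 * b" unfolding e1 e2 assms(2) ..
  then show ?thesis by (simp add: algebra_simps)
qed

lemma exp_integral_pos:
  fixes Om :: "(real \<times> real) set" and k :: real
  assumes "bounded_domain Om" "k \<ge> 0"
  shows "integral Om (\<lambda>(x', y'). exp (- k * x')) > 0"
    "(\<lambda>(x', y'). exp (- k * x')) integrable_on Om"
proof -
  have Om: "open Om" "bounded Om" "Om \<noteq> {}" using assms(1) unfolding bounded_domain_def by auto
  define E where "E = (\<lambda>(x'::real, y'::real). exp (- k * x'))"
  have Ec: "continuous_on UNIV E" unfolding E_def by (auto simp: case_prod_beta' intro!: continuous_intros)
  obtain b where b: "Om \<subseteq> cbox (-b) b" using bounded_subset_cbox_symmetric[OF Om(2)] by blast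
  have "E absolutely_integrable_on cbox (-b) b"
    by (rule absolutely_integrable_continuous) (use Ec continuous_on_subset in blast)
  moreover have Oml: "Om \<in> lmeasurable" using Om by (simp add: lmeasurable_open)
  ultimately have "set_integrable lebesgue Om E"
    using set_integrable_subset[of lebesgue "cbox (-b) b" E Om] b by (auto simp: fmeasurable_def)
  then show Eint: "(\<lambda>(x', y'). exp (- k * x')) integrable_on Om"
    using set_lebesgue_integral_eq_integral(1) unfolding E_def by blast
  define d where "d = exp (- k * fst b)"
  have d: "d > 0" unfolding d_def by simp
  have le: "d \<le> E p" if "p \<in> Om" for p
  proof -
    have "fst p \<le> fst b" using b that by (cases p; cases b) (auto simp: cbox_Pair_iff)
    then have "- k * fst b \<le> - k * fst p" using assms(2) by (simp add: mult_left_mono)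
    then show ?thesis unfolding d_def E_def by (cases p) simp
  qed
  have "integral Om (\<lambda>p. d) \<le> integral Om E"
    by (rule integral_le[OF integrable_on_const[OF Oml] Eint[folded E_def]]) (use le in auto)
  moreover have "integral Om (\<lambda>p. d) = d * measure lebesgue Om"
    using lmeasure_integral[OF Oml] integral_mult_right[of Om d "\<lambda>x. 1"] by simp
  moreover have "measure lebesgue Om > 0"
  proof -
    obtain p0 where "p0 \<in> Om" using Om by blast
    then obtain e where e: "e > 0" "ball p0 e \<subseteq> Om" using Om(1) open_contains_ball by blast
    have "measure lebesgue (ball p0 e) = measure lborel (ball p0 e)" by (intro measure_completion) simp
    also have "\<dots> > 0" using content_ball_pos[OF e(1)] by simp
    finally have "0 < measure lebesgue (ball p0 e)" .
    also have "\<dots> \<le> measure lebesgue Om"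
      by (rule measure_mono_fmeasurable[OF e(2)]) (use Oml in \<open>auto simp: fmeasurable_def\<close>)
    finally show ?thesis .
  qed
  ultimately show "integral Om (\<lambda>(x', y'). exp (- k * x')) > 0"
    unfolding E_def[symmetric] using d by (smt (verit) mult_pos_pos)
qed



theorem proposition1p1:
  fixes gamma chi a V :: real and f :: "real \<Rightarrow> real"
    and Om U :: "(real \<times> real) set" and phi P c :: "real \<times> real \<Rightarrow> real"
  assumes "gamma \<ge> 0" and "chi \<ge> 0" and "0 \<le> a" and "a \<le> 1"
    and "traveling_wave gamma chi a f Om U phi V P c"
    and "\<forall>p\<in>Om. c p \<ge> 0"
  defines "M \<equiv> integral Om c"
  shows "\<exists>p1::real.
     (\<forall>x y. (x, y) \<in> Om \<longrightarrow>
        P (x, y) = p1 - V * x \<and>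
        c (x, y) = M / integral Om (\<lambda>(x', y'). exp (- a * V * x')) * exp (- a * V * x)) \<and>
     (\<forall>x y. (x, y) \<in> frontier Om \<longrightarrow>
        gamma * curvature phi (x, y) = p1 - V * x
          - chi * f (M / integral Om (\<lambda>(x', y'). exp (- a * V * x')) * exp (- a * V * x)))"
proof -
  have dom: "bounded_domain Om" and C21: "C21_defining_function Om U phi" and V: "V > 0"
    and harm: "\<forall>p\<in>Om. - laplacian P p = 0"
    and bcP: "\<forall>p\<in>frontier Om. P p = gamma * curvature phi p + chi * f (c p)"
    and neuP: "\<forall>p\<in>frontier Om. - (grad P p \<bullet> normal phi p) = (V, 0) \<bullet> normal phi p"
    and divc: "\<forall>p\<in>Om. div2 (\<lambda>q. c q *\<^sub>R (V, 0) + ((1 - a) * c q) *\<^sub>R grad P q + grad c q) p = 0"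
    and bcc: "\<forall>p\<in>frontier Om. a * c p * ((V, 0) \<bullet> normal phi p) + grad c p \<bullet> normal phi p = 0"
    using assms(5) unfolding traveling_wave_def by blast+
  obtain W where W: "open W" "closure Om \<subseteq> W" and sP: "smooth_on W P" and sc: "smooth_on W c"
    using assms(5) unfolding traveling_wave_def by blast
  have U: "open U" "frontier Om \<subseteq> U" and phi2: "Ck 2 U phi"
    and lev: "Om \<inter> U = {p \<in> U. phi p < 0}" and ngr: "\<forall>p\<in>frontier Om. grad phi p \<noteq> 0"
    using C21 unfolding C21_defining_function_def by blast+
  have Om: "open Om" "bounded Om" "Om \<noteq> {}" using dom unfolding bounded_domain_def by auto
  note ph = Ck2_C2[OF phi2]
  note Pd = smooth_C2[OF sP]
  note cd = smooth_C2[OF sc]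
  have ng: "\<forall>p\<in>frontier Om. (dX phi p, dY phi p) \<noteq> 0" using ngr unfolding grad_def by simp
  have nP: "(dX P p + V) * dX phi p + (dY P p + 0) * dY phi p = 0" if "p \<in> frontier Om" for p
  proof -
    note nn = normal_parts[OF ngr[rule_format, OF that]]
    have h: "- ((dX P p, dY P p) \<bullet> normal phi p) = (V, 0) \<bullet> normal phi p" using neuP that unfolding grad_def by blast
    show ?thesis
      by (rule neumann_alg[OF nn(2)]) (use h in \<open>simp add: nn(1) algebra_simps\<close>)
  qed
  have wP: "C1 (\<lambda>p. P p + V * fst p) (\<lambda>p. dX P p + V) (dY P) W"
    using C1_add[OF Pd(1) C1_cmult[OF C1_fst, of V]] by simp
  have F1P: "C1 (\<lambda>p. dX P p + V) (dX (dX P)) (dY (dX P)) W"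
    using C1_add[OF Pd(2) C1_const[of V]] by simp
  obtain p1 where p1: "\<forall>p\<in>Om. P p + V * fst p = p1"
  proof -
    have "\<exists>k. \<forall>p\<in>Om. P p + V * fst p = k"
    proof (rule neumann_const[OF dom U ph(1) ph(2) ph(3) lev ng W wP F1P Pd(3), where rho="\<lambda>p. 1"])
      show "\<forall>p\<in>Om. (0::real) < 1" by simp
      show "\<forall>p\<in>Om. dX P p + V = 1 * (dX P p + V) \<and> dY P p = 1 * dY P p" by simp
      show "\<forall>p\<in>Om. dX (dX P) p + dY (dY P) p = 0" using harm unfolding laplacian_def by (metis add.inverse_neutral neg_equal_iff_equal add_eq_0_iff2)
      show "\<forall>p\<in>frontier Om. (dX P p + V) * dX phi p + dY P p * dY phi p = 0" using nP by simp
    qed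
    then show ?thesis using that by blast
  qed
  have gradP: "dX P p = - V" "dY P p = 0" if "p \<in> Om" for p
  proof -
    have "C1 (\<lambda>p. p1 - V * fst p) (\<lambda>p. 0 - V * 1) (\<lambda>p. 0 - V * 0) Om"
      using C1_add[OF C1_const[of p1] C1_cmult[OF C1_fst, of "- V"]] by simp
    then have "C1 P (\<lambda>p. - V) (\<lambda>p. 0) Om"
      by (rule C1_cong) (use Om(1) p1 in \<open>auto simp: algebra_simps\<close>)
    then show "dX P p = - V" "dY P p = 0" using C1_dXY[OF _ that] by auto
  qed
  define FF where "FF = (\<lambda>q. c q *\<^sub>R (V, 0) + ((1 - a) * c q) *\<^sub>R grad P q + grad c q)"
  define F1 where "F1 = (\<lambda>q. fst (FF q))"
  define F2 where "F2 = (\<lambda>q. snd (FF q))"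
  have F1e: "F1 = (\<lambda>q. c q * V + (1 - a) * c q * dX P q + dX c q)" unfolding F1_def FF_def grad_def by auto
  have F2e: "F2 = (\<lambda>q. (1 - a) * c q * dY P q + dY c q)" unfolding F2_def FF_def grad_def by auto
  have F1C: "C1 F1 (dX F1) (dY F1) W" unfolding F1e
    by (rule C1_canon[OF C1_add[OF C1_add[OF C1_mult[OF cd(1) C1_const] C1_mult[OF C1_cmult[OF cd(1)] Pd(2)]] cd(2)] W(1)])
  have F2C: "C1 F2 (dX F2) (dY F2) W" unfolding F2e
    by (rule C1_canon[OF C1_add[OF C1_mult[OF C1_cmult[OF cd(1)] Pd(3)] cd(3)] W(1)])
  have wc: "C1 (\<lambda>p. c p * exp (a * V * fst p))
      (\<lambda>p. dX c p * exp (a * V * fst p) + c p * (exp (a * V * fst p) * (a * V * 1)))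
      (\<lambda>p. dY c p * exp (a * V * fst p) + c p * (exp (a * V * fst p) * (a * V * 0))) W"
    by (rule C1_mult[OF cd(1) C1_exp[OF C1_cmult[OF C1_fst]]])
  obtain K where K: "\<forall>p\<in>Om. c p * exp (a * V * fst p) = K"
  proof -
    have "\<exists>k. \<forall>p\<in>Om. c p * exp (a * V * fst p) = k"
    proof (rule neumann_const[OF dom U ph(1) ph(2) ph(3) lev ng W wc F1C F2C, where rho="\<lambda>p. exp (- (a * V * fst p))"])
      show "\<forall>p\<in>Om. 0 < exp (- (a * V * fst p))" by simp
      show "\<forall>p\<in>Om. F1 p = exp (- (a * V * fst p)) * (dX c p * exp (a * V * fst p) + c p * (exp (a * V * fst p) * (a * V * 1))) \<and>
          F2 p = exp (- (a * V * fst p)) * (dY c p * exp (a * V * fst p) + c p * (exp (a * V * fst p) * (a * V * 0)))"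
      proof
        fix p assume p: "p \<in> Om"
        have ee: "exp (- (a * V * fst p)) * exp (a * V * fst p) = 1" by (subst exp_add[symmetric]) simp
        show "F1 p = exp (- (a * V * fst p)) * (dX c p * exp (a * V * fst p) + c p * (exp (a * V * fst p) * (a * V * 1))) \<and>
          F2 p = exp (- (a * V * fst p)) * (dY c p * exp (a * V * fst p) + c p * (exp (a * V * fst p) * (a * V * 0)))"
          using gradP[OF p] ee unfolding F1e F2e by (simp add: algebra_simps)
      qed
      show "\<forall>p\<in>Om. dX F1 p + dY F2 p = 0" using divc unfolding div2_def F1_def F2_def FF_def by simp
      show "\<forall>p\<in>frontier Om. F1 p * dX phi p + F2 p * dY phi p = 0"
      proof
        fix p assume p: "p \<in> frontier Om"
        note nn = normal_parts[OF ngr[rule_format, OF p]]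
        define N where "N = norm (dX phi p, dY phi p)"
        have e1: "a * c p * (V * (dX phi p / N)) + (dX c p * (dX phi p / N) + dY c p * (dY phi p / N)) = 0"
        proof -
          have h: "a * c p * ((V, 0) \<bullet> normal phi p) + (dX c p, dY c p) \<bullet> normal phi p = 0"
            using bcc p unfolding grad_def by blast
          then show ?thesis unfolding N_def by (simp add: nn(1) algebra_simps)
        qed
        have "(dX c p + a * c p * V) * dX phi p + (dY c p + 0) * dY phi p = 0"
        proof (rule neumann_alg[of N])
          show "N \<noteq> 0" using nn(2) N_def by simp
          show "- (dX c p * (dX phi p / N) + dY c p * (dY phi p / N)) = a * c p * V * (dX phi p / N) + 0 * (dY phi p / N)"
            using e1 by (simp add: algebra_simps)
        qed
        moreover have "F1 p * dX phi p + F2 p * dY phi p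
            = (dX c p + a * c p * V) * dX phi p + (dY c p + 0) * dY phi p
              + (1 - a) * c p * ((dX P p + V) * dX phi p + (dY P p + 0) * dY phi p)"
          unfolding F1e F2e by (simp add: algebra_simps)
        ultimately show "F1 p * dX phi p + F2 p * dY phi p = 0" using nP[OF p] by simp
      qed
    qed
    then show ?thesis using that by blast
  qed
  have cOm: "c p = K * exp (- a * V * fst p)" if "p \<in> Om" for p
  proof -
    have h: "c p * exp (a * V * fst p) = K" using K that by blast
    have "c p = c p * (exp (a * V * fst p) * exp (- (a * V * fst p)))"
      by (subst exp_add[symmetric]) simp
    also have "\<dots> = K * exp (- (a * V * fst p))" using h by (simp add: mult.assoc[symmetric])
    finally show ?thesis by simp
  qed
  define I where "I = integral Om (\<lambda>(x', y'). exp (- a * V * x'))"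
  have aV: "a * V \<ge> 0" using assms(3) V by simp
  have Ipos: "I > 0" unfolding I_def using exp_integral_pos(1)[OF dom aV] by simp
  have "M = integral Om (\<lambda>p. K * (\<lambda>(x', y'). exp (- a * V * x')) p)"
    unfolding M_def by (rule integral_cong) (use cOm in \<open>auto simp: case_prod_beta'\<close>)
  also have "\<dots> = K * I" unfolding I_def by simp
  finally have KM: "K = M / I" using Ipos by simp
  have cOm': "c p = M / I * exp (- a * V * fst p)" if "p \<in> Om" for p using cOm[OF that] KM by simp
  have POm: "P p = p1 - V * fst p" if "p \<in> Om" for p using p1 that by (simp add: algebra_simps)
  have Pcont: "continuous_on (closure Om) P" using C1_cont[OF Pd(1)] W(2) continuous_on_subset by blast
  have ccont: "continuous_on (closure Om) c" using C1_cont[OF cd(1)] W(2) continuous_on_subset by blast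
  have Pcl: "P p = p1 - V * fst p" if "p \<in> closure Om" for p
    by (rule eq_on_closure[OF Pcont _ POm that]) (auto intro!: continuous_intros)
  have ccl: "c p = M / I * exp (- a * V * fst p)" if "p \<in> closure Om" for p
    by (rule eq_on_closure[OF ccont _ cOm' that]) (use Ipos in \<open>auto intro!: continuous_intros\<close>)
  show ?thesis
  proof (intro exI[of _ p1] conjI allI impI)
    fix x y assume xy: "(x, y) \<in> Om"
    show "P (x, y) = p1 - V * x" using POm[OF xy] by simp
    show "c (x, y) = M / integral Om (\<lambda>(x', y'). exp (- a * V * x')) * exp (- a * V * x)"
      using cOm'[OF xy] unfolding I_def by simp
  next
    fix x y assume xy: "(x, y) \<in> frontier Om"
    then have cl: "(x, y) \<in> closure Om" by (simp add: frontier_def)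
    have "P (x, y) = gamma * curvature phi (x, y) + chi * f (c (x, y))" using bcP xy by blast
    then show "gamma * curvature phi (x, y) = p1 - V * x
          - chi * f (M / integral Om (\<lambda>(x', y'). exp (- a * V * x')) * exp (- a * V * x))"
      using Pcl[OF cl] ccl[OF cl] unfolding I_def by simp
  qed
qed


end
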